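(* With the notation of the context, $$\sum_{\lambda\in\mathcal{D}}(-1)^{n_\lambda}(m_\lambda+n_\lambda)q^{N_\lambda} =\sum_{r=1}^\infty(-1)^r\Big[(3r-1)q^{r(3r-1)/2}+3r\,q^{r(3r+1)/2}\Big]$$ as formal power series in $q$.
   Context: $\mathcal{D}$ denotes the set of all partitions into distinct parts (of all nonnegative integers, including the empty partition of $0$). For $\lambda\in\mathcal{D}$, $N_\lambda$ is the integer partitioned by $\lambda$, $n_\lambda$ is the number of parts of $\lambda$, and $m_\lambda$ is the largest part of $\lambda$ (with $m_\lambda=0$ for the empty partition). *)

theory Defs
  imports "HOL-Computational_Algebra.Formal_Power_Series"
begin

text \<open>A partition into distinct parts is represented by its (finite) set of parts,
  all of which are positive integers. The empty set is the empty partition of 0.\<close>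

definition distinct_partition :: "nat set \<Rightarrow> bool" where
  "distinct_partition S \<longleftrightarrow> finite S \<and> 0 \<notin> S"

definition part_sum :: "nat set \<Rightarrow> nat" where
  "part_sum S = \<Sum>S"

definition num_parts :: "nat set \<Rightarrow> nat" where
  "num_parts S = card S"

definition largest_part :: "nat set \<Rightarrow> nat" where
  "largest_part S = (if S = {} then 0 else Max S)"

definition distinct_partitions_of :: "nat \<Rightarrow> nat set set" where
  "distinct_partitions_of N = {S. distinct_partition S \<and> part_sum S = N}"

end

theory Submission
  imports Defs
begin

definition sig :: "nat set \<Rightarrow> nat" where
  "sig S = (LEAST j. Max S - j \<notin> S)"

definition phi :: "nat set \<Rightarrow> nat set" where
  "phi S = (if Min S \<le> sig S then insert (Max S + 1) (S - {Min S, Max S + 1 - Min S})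
            else insert (sig S) (insert (Max S - sig S) (S - {Max S})))"

definition exc :: "nat set \<Rightarrow> bool" where
  "exc S \<longleftrightarrow> Max S + 1 = Min S + sig S \<and> (Min S = sig S \<or> Min S = sig S + 1)"

lemma sig_eq:
  assumes "\<forall>j<k. Max S - j \<in> S" "Max S - k \<notin> S"
  shows "sig S = k"
  unfolding sig_def
proof (rule Least_equality)
  show "Max S - k \<notin> S" by fact
  fix y assume "Max S - y \<notin> S"
  then show "k \<le> y" using assms(1) by (meson not_le)
qed

lemma sig_props:
  assumes "finite S" "S \<noteq> {}" "0 \<notin> S"
  shows "1 \<le> sig S" "sig S \<le> Max S" "\<forall>j<sig S. Max S - j \<in> S" "Max S - sig S \<notin> S"
proof -
  have ex: "Max S - Max S \<notin> S" using assms by simp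
  show "Max S - sig S \<notin> S" unfolding sig_def by (rule LeastI[of _ "Max S"], rule ex)
  show "sig S \<le> Max S" unfolding sig_def by (rule Least_le, rule ex)
  show "\<forall>j<sig S. Max S - j \<in> S" unfolding sig_def using not_less_Least by blast
  have "Max S \<in> S" using assms by simp
  then have "sig S \<noteq> 0" using \<open>Max S - sig S \<notin> S\<close> by (metis minus_nat.diff_0)
  then show "1 \<le> sig S" by simp
qed

lemma moveA:
  assumes fin: "finite S" and ne: "S \<noteq> {}" and z: "0 \<notin> S"
    and le: "Min S \<le> sig S" and nex: "\<not> exc S"
  defines "T \<equiv> insert (Max S + 1) (S - {Min S, Max S + 1 - Min S})"
  shows "phi S = T" "finite T" "T \<noteq> {}" "0 \<notin> T" "\<Sum>T = \<Sum>S" "card T + 1 = card S"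
    "Max T = Max S + 1" "\<not> exc T" "phi T = S" "\<not> Min T \<le> sig T"
proof -
  define s where "s = Min S"
  define m where "m = Max S"
  define \<sigma> where "\<sigma> = sig S"
  note sp = sig_props[OF fin ne z, folded \<sigma>_def m_def]
  have sS: "s \<in> S" using fin ne s_def by simp
  have mS: "m \<in> S" using fin ne m_def by simp
  have smin: "\<And>x. x \<in> S \<Longrightarrow> s \<le> x" using fin s_def by simp
  have mmax: "\<And>x. x \<in> S \<Longrightarrow> x \<le> m" using fin m_def by simp
  have s1: "s \<ge> 1" using sS z by (cases s) auto
  have run: "\<And>j. j < \<sigma> \<Longrightarrow> m - j \<in> S" using sp by blast
  have r1: "m + 1 - \<sigma> \<in> S" using run[of "\<sigma> - 1"] sp by (simp add: Suc_diff_le)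
  have "s \<le> m + 1 - \<sigma>" using smin[OF r1] .
  then have ms: "s + \<sigma> \<le> m + 1" using sp by linarith
  have lsig: "s \<le> \<sigma>" using le s_def \<sigma>_def by simp
  have neq: "s \<noteq> m + 1 - s" using nex ms lsig unfolding exc_def s_def[symmetric] m_def[symmetric] \<sigma>_def[symmetric]
    by linarith
  have bS: "m + 1 - s \<in> S" using run[of "s - 1"] lsig s1 sp by (simp add: Suc_diff_le)
  have m1: "m + 1 \<notin> S" using mmax by fastforce
  have Tdef: "T = insert (m + 1) (S - {s, m + 1 - s})" unfolding T_def s_def m_def ..
  show "phi S = T" unfolding phi_def T_def using le by simp
  show finT: "finite T" using fin Tdef by simp
  show "T \<noteq> {}" using Tdef by simp
  show "0 \<notin> T" using z Tdef by auto
  have Sd: "S = insert s (insert (m + 1 - s) (S - {s, m + 1 - s}))" using sS bS by auto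
  have "\<Sum>S = s + ((m + 1 - s) + \<Sum>(S - {s, m + 1 - s}))"
    using neq fin by (subst Sd) simp
  moreover have "\<Sum>T = (m + 1) + \<Sum>(S - {s, m + 1 - s})" using m1 fin Tdef by simp
  ultimately show "\<Sum>T = \<Sum>S" using s1 ms lsig by simp
  have "card S = Suc (Suc (card (S - {s, m + 1 - s})))"
    using neq fin by (subst Sd) simp
  moreover have "card T = Suc (card (S - {s, m + 1 - s}))" using m1 fin Tdef by simp
  ultimately show "card T + 1 = card S" by simp
  have MT: "Max T = m + 1"
    using finT Tdef mmax by (intro Max_eqI) (auto intro: le_SucI)
  then show "Max T = Max S + 1" using m_def by simp
  have gt: "\<And>x. x \<in> T \<Longrightarrow> s < x"
    using Tdef smin ms sp by (auto simp: le_neq_implies_less)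
  have "Min T \<in> T" using finT Tdef by (intro Min_in) auto
  then have mT: "s < Min T" using gt by blast
  have sigT: "sig T = s"
  proof (rule sig_eq)
    show "\<forall>j<s. Max T - j \<in> T"
    proof (intro allI impI)
      fix j assume j: "j < s"
      show "Max T - j \<in> T"
      proof (cases "j = 0")
        case True then show ?thesis using MT Tdef by simp
      next
        case False
        have "m - (j - 1) \<in> S" using run j lsig by simp
        moreover have "m - (j - 1) = m + 1 - j" using False j ms by linarith
        moreover have "m + 1 - j \<noteq> s" using False j ms lsig by linarith
        moreover have "m + 1 - j \<noteq> m + 1 - s" using j ms by linarith
        ultimately show ?thesis using MT Tdef by auto
      qed
    qed
    show "Max T - s \<notin> T" using MT Tdef s1 by auto
  qed
  show "\<not> Min T \<le> sig T" using sigT mT by simp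
  show "\<not> exc T" unfolding exc_def sigT MT using mT neq by linarith
  have "phi T = insert s (insert (m + 1 - s) (T - {m + 1}))"
    unfolding phi_def sigT MT using mT by simp
  also have "T - {m + 1} = S - {s, m + 1 - s}" using Tdef m1 by auto
  finally show "phi T = S" using Sd by simp
qed

lemma moveB:
  assumes fin: "finite S" and ne: "S \<noteq> {}" and z: "0 \<notin> S"
    and le: "\<not> Min S \<le> sig S" and nex: "\<not> exc S"
  defines "T \<equiv> insert (sig S) (insert (Max S - sig S) (S - {Max S}))"
  shows "phi S = T" "finite T" "T \<noteq> {}" "0 \<notin> T" "\<Sum>T = \<Sum>S" "card T = card S + 1"
    "Max T + 1 = Max S" "\<not> exc T" "phi T = S" "Min T \<le> sig T"
proof -
  define s where "s = Min S"
  define m where "m = Max S"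
  define \<sigma> where "\<sigma> = sig S"
  note sp = sig_props[OF fin ne z, folded \<sigma>_def m_def]
  have sS: "s \<in> S" using fin ne s_def by simp
  have mS: "m \<in> S" using fin ne m_def by simp
  have smin: "\<And>x. x \<in> S \<Longrightarrow> s \<le> x" using fin s_def by simp
  have mmax: "\<And>x. x \<in> S \<Longrightarrow> x \<le> m" using fin m_def by simp
  have run: "\<And>j. j < \<sigma> \<Longrightarrow> m - j \<in> S" using sp by blast
  have r1: "m + 1 - \<sigma> \<in> S" using run[of "\<sigma> - 1"] sp by (simp add: Suc_diff_le)
  have "s \<le> m + 1 - \<sigma>" using smin[OF r1] .
  then have ms: "s + \<sigma> \<le> m + 1" using sp by linarith
  have lsig: "\<sigma> < s" using le s_def \<sigma>_def by simp
  have lt: "2 * \<sigma> < m" using nex ms lsig unfolding exc_def s_def[symmetric] m_def[symmetric] \<sigma>_def[symmetric]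
    by linarith
  have nS: "m - \<sigma> \<notin> S" using sp by simp
  have sn: "\<sigma> \<notin> S" using smin lsig by fastforce
  have Tdef: "T = insert \<sigma> (insert (m - \<sigma>) (S - {m}))" unfolding T_def \<sigma>_def m_def ..
  show "phi S = T" unfolding phi_def T_def using le by simp
  show finT: "finite T" using fin Tdef by simp
  show "T \<noteq> {}" using Tdef by simp
  show "0 \<notin> T" using z Tdef sp lt by auto
  have Sd: "S = insert m (S - {m})" using mS by auto
  have "\<Sum>S = m + \<Sum>(S - {m})" using sum.remove[OF fin mS] by simp
  moreover have "\<Sum>T = \<sigma> + ((m - \<sigma>) + \<Sum>(S - {m}))" using fin Tdef sn nS lt by simp
  ultimately show "\<Sum>T = \<Sum>S" using lt by simp
  have "card S = Suc (card (S - {m}))" using card_Suc_Diff1[OF fin mS] by simp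
  moreover have "card T = Suc (Suc (card (S - {m})))" using fin Tdef sn nS lt by simp
  ultimately show "card T = card S + 1" by simp
  have m1T: "m - 1 \<in> T"
  proof (cases "\<sigma> = 1")
    case True then show ?thesis using Tdef by simp
  next
    case False
    then have "m - 1 \<in> S" using run[of 1] sp by simp
    then show ?thesis using Tdef lt by auto
  qed
  have leT: "y \<le> m - 1" if yT: "y \<in> T" for y
  proof -
    consider "y = \<sigma>" | "y = m - \<sigma>" | "y \<in> S" "y \<noteq> m" using yT Tdef by blast
    then show ?thesis
    proof cases
      case 3 then have "y \<le> m" using mmax by blast
      with 3 show ?thesis by linarith
    qed (use lt sp in linarith)+
  qed
  have MT: "Max T = m - 1"
    using finT m1T leT by (intro Max_eqI) auto
  then show "Max T + 1 = Max S" using m_def lt by simp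
  have geT: "\<sigma> \<le> y" if yT: "y \<in> T" for y
  proof -
    consider "y = \<sigma>" | "y = m - \<sigma>" | "y \<in> S" using yT Tdef by blast
    then show ?thesis
    proof cases
      case 3 then have "s \<le> y" using smin by blast
      with lsig show ?thesis by linarith
    qed (use lt in linarith)+
  qed
  have minT: "Min T = \<sigma>"
    using finT geT Tdef by (intro Min_eqI) auto
  have runT: "\<And>j. j < \<sigma> \<Longrightarrow> m - 1 - j \<in> T"
  proof -
    fix j assume j: "j < \<sigma>"
    show "m - 1 - j \<in> T"
    proof (cases "j = \<sigma> - 1")
      case True then show ?thesis using Tdef j by (simp add: diff_diff_add)
    next
      case False
      then have "m - (j + 1) \<in> S" using run j by simp
      then show ?thesis using Tdef lt by (auto simp: diff_diff_add)
    qed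
  qed
  have spT: "Max T - sig T \<notin> T" using sig_props(4)[OF finT] Tdef \<open>0 \<notin> T\<close> by blast
  have sigT: "\<sigma> \<le> sig T"
  proof (rule ccontr)
    assume "\<not> \<sigma> \<le> sig T"
    then have "m - 1 - sig T \<in> T" using runT by simp
    then show False using spT MT by simp
  qed
  show "Min T \<le> sig T" using minT sigT by simp
  show "\<not> exc T" unfolding exc_def minT MT using sigT lt by linarith
  have "phi T = insert m (T - {\<sigma>, m - \<sigma>})"
    unfolding phi_def minT MT using sigT lt by simp
  also have "T - {\<sigma>, m - \<sigma>} = S - {m}" using Tdef sn nS lt by auto
  finally show "phi T = S" using Sd by simp
qed


definition wt :: "nat set \<Rightarrow> int" where
  "wt S = (-1) ^ num_parts S * int (largest_part S + num_parts S)"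

definition GG :: "nat \<Rightarrow> nat set set" where
  "GG N = {S \<in> distinct_partitions_of N. S \<noteq> {} \<and> \<not> exc S}"

lemma phi_G:
  assumes "S \<in> GG N"
  shows "phi S \<in> GG N \<and> phi (phi S) = S \<and> wt (phi S) = - wt S"
proof -
  have fin: "finite S" and z: "0 \<notin> S" and ne: "S \<noteq> {}" and nex: "\<not> exc S"
    and sm: "\<Sum>S = N"
    using assms by (auto simp: GG_def distinct_partitions_of_def distinct_partition_def part_sum_def)
  show ?thesis
  proof (cases "Min S \<le> sig S")
    case True
    note A = moveA[OF fin ne z True nex]
    have "phi S \<in> GG N" using A sm nex
      by (auto simp: GG_def distinct_partitions_of_def distinct_partition_def part_sum_def)
    moreover have "wt (phi S) = - wt S"
    proof -
      have c: "card S = card (phi S) + 1" using A by simp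
      have "largest_part (phi S) = largest_part S + 1" using A ne by (simp add: largest_part_def)
      then show ?thesis unfolding wt_def num_parts_def c by simp
    qed
    ultimately show ?thesis using A by simp
  next
    case False
    note B = moveB[OF fin ne z False nex]
    have "phi S \<in> GG N" using B sm nex
      by (auto simp: GG_def distinct_partitions_of_def distinct_partition_def part_sum_def)
    moreover have "wt (phi S) = - wt S"
    proof -
      have c: "card (phi S) = card S + 1" using B by simp
      have "largest_part (phi S) + 1 = largest_part S" using B ne by (simp add: largest_part_def)
      then show ?thesis unfolding wt_def num_parts_def c by auto
    qed
    ultimately show ?thesis using B by simp
  qed
qed

lemma involution_sum_zero:
  fixes h :: "'a \<Rightarrow> int"
  assumes "finite A" "\<And>x. x \<in> A \<Longrightarrow> g x \<in> A \<and> g (g x) = x \<and> h (g x) = - h x"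
  shows "sum h A = 0"
proof -
  have bij: "bij_betw g A A" by (rule bij_betwI[where g=g]) (use assms in auto)
  have "sum (\<lambda>x. h (g x)) A = sum h A" by (rule sum.reindex_bij_betw[OF bij])
  moreover have "sum (\<lambda>x. h (g x)) A = - sum h A" using assms(2) by (simp add: sum_negf)
  ultimately show ?thesis by simp
qed

lemma finite_D: "finite (distinct_partitions_of N)"
proof (rule finite_subset)
  show "distinct_partitions_of N \<subseteq> Pow {..N}"
  proof
    fix S assume "S \<in> distinct_partitions_of N"
    then have "finite S" "\<Sum>S = N"
      by (auto simp: distinct_partitions_of_def distinct_partition_def part_sum_def)
    then show "S \<in> Pow {..N}" using member_le_sum[of _ S "\<lambda>x. x"] by fastforce
  qed
qed simp

lemma sum_ivl: "2 * \<Sum>{a..<a+k} + k = k * (2 * a + k)" for a k :: nat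
  by (induction k) (auto simp: algebra_simps)

definition AA :: "nat \<Rightarrow> nat set" where "AA r = {r..<r+r}"
definition BB :: "nat \<Rightarrow> nat set" where "BB r = {Suc r..<Suc r+r}"

lemma AA_props:
  assumes "r \<ge> 1"
  shows "finite (AA r)" "0 \<notin> AA r" "AA r \<noteq> {}" "Min (AA r) = r" "Max (AA r) = r + r - 1"
    "sig (AA r) = r" "exc (AA r)" "card (AA r) = r" "2 * \<Sum>(AA r) = r * (3 * r - 1)"
    "wt (AA r) = (-1) ^ r * int (3 * r - 1)"
proof -
  show f: "finite (AA r)" "0 \<notin> AA r" "AA r \<noteq> {}" using assms by (auto simp: AA_def)
  show mn: "Min (AA r) = r" using assms by (intro Min_eqI) (auto simp: AA_def)
  show mx: "Max (AA r) = r + r - 1" using assms by (intro Max_eqI) (auto simp: AA_def)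
  show sg: "sig (AA r) = r" 
  proof (rule sig_eq)
    show "\<forall>j<r. Max (AA r) - j \<in> AA r" unfolding mx using assms by (auto simp: AA_def)
    show "Max (AA r) - r \<notin> AA r" unfolding mx using assms by (simp add: AA_def)
  qed
  show "exc (AA r)" unfolding exc_def mn mx sg using assms by simp
  show c: "card (AA r) = r" by (simp add: AA_def)
  have "2 * \<Sum>(AA r) + r = r * (3 * r)" unfolding AA_def using sum_ivl[of r r] by simp
  then show "2 * \<Sum>(AA r) = r * (3 * r - 1)" by (simp add: diff_mult_distrib2)
  show "wt (AA r) = (-1) ^ r * int (3 * r - 1)"
    unfolding wt_def num_parts_def largest_part_def c mx using f assms by simp
qed

lemma BB_props:
  assumes "r \<ge> 1"
  shows "finite (BB r)" "0 \<notin> BB r" "BB r \<noteq> {}" "Min (BB r) = r + 1" "Max (BB r) = r + r"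
    "sig (BB r) = r" "exc (BB r)" "card (BB r) = r" "2 * \<Sum>(BB r) = r * (3 * r + 1)"
    "wt (BB r) = (-1) ^ r * int (3 * r)"
proof -
  show f: "finite (BB r)" "0 \<notin> BB r" "BB r \<noteq> {}" using assms by (auto simp: BB_def)
  show mn: "Min (BB r) = r + 1" using assms by (intro Min_eqI) (auto simp: BB_def)
  show mx: "Max (BB r) = r + r" using assms by (intro Max_eqI) (auto simp: BB_def)
  show sg: "sig (BB r) = r" 
  proof (rule sig_eq)
    show "\<forall>j<r. Max (BB r) - j \<in> BB r" unfolding mx using assms by (auto simp: BB_def)
    show "Max (BB r) - r \<notin> BB r" unfolding mx using assms by (simp add: BB_def)
  qed
  show "exc (BB r)" unfolding exc_def mn mx sg using assms by simp
  show c: "card (BB r) = r" by (simp add: BB_def)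
  have "2 * \<Sum>(BB r) + r = r * (3 * r + 2)" unfolding BB_def using sum_ivl[of "Suc r" r] by simp
  then show "2 * \<Sum>(BB r) = r * (3 * r + 1)" by (simp add: algebra_simps)
  show "wt (BB r) = (-1) ^ r * int (3 * r)"
    unfolding wt_def num_parts_def largest_part_def c mx using f assms by simp
qed

definition R1 :: "nat \<Rightarrow> nat set" where "R1 N = {r \<in> {1..N}. N = r * (3 * r - 1) div 2}"
definition R2 :: "nat \<Rightarrow> nat set" where "R2 N = {r \<in> {1..N}. N = r * (3 * r + 1) div 2}"

definition HH :: "nat \<Rightarrow> nat set set" where
  "HH N = {S \<in> distinct_partitions_of N. S \<noteq> {} \<and> exc S}"

lemma HH_eq: "HH N = AA ` R1 N \<union> BB ` R2 N"
proof
  show "HH N \<subseteq> AA ` R1 N \<union> BB ` R2 N"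
  proof
    fix S assume "S \<in> HH N"
    then have fin: "finite S" and z: "0 \<notin> S" and ne: "S \<noteq> {}" and ex: "exc S"
      and sm: "\<Sum>S = N"
      by (auto simp: HH_def distinct_partitions_of_def distinct_partition_def part_sum_def)
    define s where "s = Min S"
    define m where "m = Max S"
    define \<sigma> where "\<sigma> = sig S"
    note sp = sig_props[OF fin ne z, folded \<sigma>_def m_def]
    have ex': "m + 1 = s + \<sigma>" "s = \<sigma> \<or> s = \<sigma> + 1" using ex unfolding exc_def s_def m_def \<sigma>_def by auto
    have Seq: "S = {s..m}"
    proof
      show "S \<subseteq> {s..m}" using fin ne s_def m_def by auto
      show "{s..m} \<subseteq> S"
      proof
        fix x assume x: "x \<in> {s..m}"
        then have "m - (m - x) \<in> S" using sp(3) ex' by (intro sp(3)[rule_format]) auto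
        then show "x \<in> S" using x by simp
      qed
    qed
    have sS: "s \<in> S" using fin ne s_def by simp
    then have sN: "s \<le> N" using sm member_le_sum[of s S "\<lambda>x. x"] fin by simp
    have s1: "s \<ge> 1" using sS z by (cases s) auto
    from ex'(2) show "S \<in> AA ` R1 N \<union> BB ` R2 N"
    proof
      assume "s = \<sigma>"
      then have SA: "S = AA s" unfolding Seq AA_def using ex' s1 by auto
      have "2 * N = s * (3 * s - 1)" using AA_props(9)[OF s1] SA sm by simp
      then have "N = s * (3 * s - 1) div 2" by simp
      then have "s \<in> R1 N" unfolding R1_def using s1 sN by simp
      then show ?thesis using SA by blast
    next
      assume e: "s = \<sigma> + 1"
      have s1': "\<sigma> \<ge> 1" using sp by simp
      have SB: "S = BB \<sigma>" unfolding Seq BB_def using ex' e by auto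
      have "2 * N = \<sigma> * (3 * \<sigma> + 1)" using BB_props(9)[OF s1'] SB sm by simp
      then have "N = \<sigma> * (3 * \<sigma> + 1) div 2" by simp
      then have "\<sigma> \<in> R2 N" unfolding R2_def using s1' sN e by simp
      then show ?thesis using SB by blast
    qed
  qed
  show "AA ` R1 N \<union> BB ` R2 N \<subseteq> HH N"
  proof safe
    fix r assume "r \<in> R1 N"
    then have r: "r \<ge> 1" "N = r * (3 * r - 1) div 2" by (auto simp: R1_def)
    note P = AA_props[OF r(1)]
    have "\<Sum>(AA r) = N" using P(9) r(2) by simp
    then show "AA r \<in> HH N" using P
      by (auto simp: HH_def distinct_partitions_of_def distinct_partition_def part_sum_def)
  next
    fix r assume "r \<in> R2 N"
    then have r: "r \<ge> 1" "N = r * (3 * r + 1) div 2" by (auto simp: R2_def)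
    note P = BB_props[OF r(1)]
    have "\<Sum>(BB r) = N" using P(9) r(2) by simp
    then show "BB r \<in> HH N" using P
      by (auto simp: HH_def distinct_partitions_of_def distinct_partition_def part_sum_def)
  qed
qed

lemma coeff_eq:
  "(\<Sum>S\<in>distinct_partitions_of N. (-1) ^ num_parts S * int (largest_part S + num_parts S))
   = (\<Sum>r\<in>{1..N}. (-1) ^ r * ((if N = r * (3 * r - 1) div 2 then int (3 * r - 1) else 0)
                      + (if N = r * (3 * r + 1) div 2 then int (3 * r) else 0)))"
proof -
  let ?D = "distinct_partitions_of N"
  have fD: "finite ?D" by (rule finite_D)
  have GD: "GG N \<subseteq> ?D" by (auto simp: GG_def)
  have e1: "(\<Sum>S\<in>?D. (-1) ^ num_parts S * int (largest_part S + num_parts S)) = sum wt ?D"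
    unfolding wt_def ..
  have e2: "sum wt ?D = sum wt (GG N) + sum wt (?D - GG N)"
    using sum.subset_diff[OF GD fD, of wt] by simp
  have e3: "sum wt (GG N) = 0"
  proof (rule involution_sum_zero[where g = phi])
    show "finite (GG N)" using finite_subset[OF GD fD] .
    fix x assume "x \<in> GG N"
    then show "phi x \<in> GG N \<and> phi (phi x) = x \<and> wt (phi x) = - wt x" by (rule phi_G)
  qed
  have e4: "sum wt (?D - GG N) = sum wt (HH N)"
  proof (rule sum.mono_neutral_cong_right)
    show "finite (?D - GG N)" using fD by simp
    show "HH N \<subseteq> ?D - GG N" by (auto simp: HH_def GG_def)
    show "\<forall>x\<in>?D - GG N - HH N. wt x = 0"
      by (auto simp: HH_def GG_def wt_def num_parts_def largest_part_def)
  qed simp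
  have fR: "finite (R1 N)" "finite (R2 N)" by (auto simp: R1_def R2_def)
  have disj: "AA ` R1 N \<inter> BB ` R2 N = {}"
  proof (rule ccontr)
    assume "AA ` R1 N \<inter> BB ` R2 N \<noteq> {}"
    then obtain r r' where r: "r \<ge> 1" "r' \<ge> 1" "AA r = BB r'"
      by (auto simp: R1_def R2_def)
    have "Min (AA r) = Min (BB r')" "Max (AA r) = Max (BB r')" using r(3) by simp_all
    then show False using AA_props[OF r(1)] BB_props[OF r(2)] by simp
  qed
  have e5: "sum wt (HH N) = sum wt (AA ` R1 N) + sum wt (BB ` R2 N)"
    unfolding HH_eq by (rule sum.union_disjoint) (simp_all add: fR disj)
  have injA: "inj_on AA (R1 N)"
  proof
    fix x y assume x: "x \<in> R1 N" and y: "y \<in> R1 N" and e: "AA x = AA y"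
    have x1: "x \<ge> 1" using x unfolding R1_def mem_Collect_eq atLeastAtMost_iff by (elim conjE)
    have y1: "y \<ge> 1" using y unfolding R1_def mem_Collect_eq atLeastAtMost_iff by (elim conjE)
    have "x = Min (AA x)" using AA_props(4)[OF x1] by (rule sym)
    also have "\<dots> = Min (AA y)" using e by (rule arg_cong)
    also have "\<dots> = y" using AA_props(4)[OF y1] .
    finally show "x = y" .
  qed
  have e6: "sum wt (AA ` R1 N) = (\<Sum>r\<in>R1 N. (-1) ^ r * int (3 * r - 1))"
    unfolding sum.reindex[OF injA] by (rule sum.cong) (auto simp: AA_props(10) R1_def)
  have injB: "inj_on BB (R2 N)"
  proof
    fix x y assume x: "x \<in> R2 N" and y: "y \<in> R2 N" and e: "BB x = BB y"
    have x1: "x \<ge> 1" using x unfolding R2_def mem_Collect_eq atLeastAtMost_iff by (elim conjE)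
    have y1: "y \<ge> 1" using y unfolding R2_def mem_Collect_eq atLeastAtMost_iff by (elim conjE)
    have "x + 1 = Min (BB x)" using BB_props(4)[OF x1] by (rule sym)
    also have "\<dots> = Min (BB y)" using e by (rule arg_cong)
    also have "\<dots> = y + 1" using BB_props(4)[OF y1] .
    finally show "x = y" by simp
  qed
  have e7: "sum wt (BB ` R2 N) = (\<Sum>r\<in>R2 N. (-1) ^ r * int (3 * r))"
    unfolding sum.reindex[OF injB] by (rule sum.cong) (auto simp: BB_props(10) R2_def)
  have e8: "(\<Sum>r\<in>R1 N. (-1) ^ r * int (3 * r - 1))
     = (\<Sum>r\<in>{1..N}. (if N = r * (3 * r - 1) div 2 then (-1) ^ r * int (3 * r - 1) else 0))"
    unfolding R1_def by (rule sum.inter_filter) simp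
  have e9: "(\<Sum>r\<in>R2 N. (-1) ^ r * int (3 * r))
     = (\<Sum>r\<in>{1..N}. (if N = r * (3 * r + 1) div 2 then (-1) ^ r * int (3 * r) else 0))"
    unfolding R2_def by (rule sum.inter_filter) simp
  have e10: "(\<Sum>r\<in>{1..N}. (if N = r * (3 * r - 1) div 2 then (-1) ^ r * int (3 * r - 1) else 0))
       + (\<Sum>r\<in>{1..N}. (if N = r * (3 * r + 1) div 2 then (-1) ^ r * int (3 * r) else 0))
     = (\<Sum>r\<in>{1..N}. (-1) ^ r * ((if N = r * (3 * r - 1) div 2 then int (3 * r - 1) else 0)
                      + (if N = r * (3 * r + 1) div 2 then int (3 * r) else 0)))"
    unfolding sum.distrib[symmetric] by (rule sum.cong) (simp_all add: distrib_left)
  show ?thesis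
    unfolding e1 e2 e3 e4 e5 e6 e7 e8 e9 e10[symmetric] by simp
qed

theorem mainTheorem2:
  shows "Abs_fps (\<lambda>N. \<Sum>S\<in>distinct_partitions_of N.
            (-1) ^ num_parts S * int (largest_part S + num_parts S))
       = (Abs_fps (\<lambda>N. \<Sum>r\<in>{1..N}.
            (-1) ^ r * ((if N = r * (3 * r - 1) div 2 then int (3 * r - 1) else 0)
                      + (if N = r * (3 * r + 1) div 2 then int (3 * r) else 0))) :: int fps)"
  by (rule arg_cong[where f=Abs_fps], rule ext, rule coeff_eq)

end
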